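(* Let $f=\sum_{k=1}^K\pi_kN(0,u_k^2)$, $s>0$, $y\in\mathbb R$, and define $h_1^{\mathrm{NM}}(\bar b,f,s^2;y)=-\sup\{F_1^{\mathrm{NM}}(q,f,s^2;y):q \text{ with }\mathbb E_q(b)=\bar b\}$. Then for all $\bar b\in\mathbb R$, $$h_1^{\mathrm{NM}}(\bar b,f,s^2;y)=\frac1{2s^2}(y-\bar b)^2+\frac1{s^2}\rho_{f,s}(\bar b),$$ and for every $y\in\mathbb R$, $\rho_{f,s}(S_{f,s}(y))=-s^2\ell_{\mathrm{NM}}(y;f,s^2)-\tfrac12(y-S_{f,s}(y))^2$ and $\rho'_{f,s}(S_{f,s}(y))=y-S_{f,s}(y)=-s^2\ell'_{\mathrm{NM}}(y;f,s^2)$, where $'$ denotes differentiation with respect to the first argument.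
   Context: $\mathrm{NM}_1(f,s^2)$: $y\mid b\sim N(b,s^2)$, latent $\gamma\in\{1,\dots,K\}$ with $P(\gamma=k)=\pi_k$, $b\mid\gamma=k\sim N(0,u_k^2)$ ($N(0,0)=\delta_0$); $p_{\mathrm{prior}}(f)$ is the joint law $\pi_kN(b;0,u_k^2)$ of $(b,\gamma)$. For a distribution $q$ on $(b,\gamma)\in\mathbb R\times\{1,\dots,K\}$, $F_1^{\mathrm{NM}}(q,f,s^2;y)=\mathbb E_q[\log N(y;b,s^2)]-D_{\mathrm{KL}}(q\,\|\,p_{\mathrm{prior}}(f))$. $\ell_{\mathrm{NM}}(y;f,s^2)=\log p(y\mid f,s^2)$ is the marginal log-likelihood and $S_{f,s}(y)=\mathbb E(b\mid y,f,s^2)$ the posterior mean. Penalty: $\rho_{f,s}(\bar b)=\inf_{q:\mathbb E_q(b)=\bar b}\{\tfrac{s^2}2\log(2\pi s^2)+\tfrac12\mathrm{Var}_q(b)+s^2D_{\mathrm{KL}}(q\,\|\,p_{\mathrm{prior}}(f))\}$ over distributions $q$ on $(b,\gamma)$. *)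

theory Defs
  imports "HOL-Probability.Probability"
begin

text \<open>Latent pairs (b, gamma) live in
  real \<times> nat with the product sigma-algebra borel \<otimes> count_space.\<close>

abbreviation latent_space :: "(real \<times> nat) measure" where
  "latent_space \<equiv> borel \<Otimes>\<^sub>M count_space UNIV"

definition comp_law :: "real \<Rightarrow> real measure" where
  "comp_law u = (if u = 0 then return borel 0 else density lborel (normal_density 0 u))"

definition prior :: "nat \<Rightarrow> (nat \<Rightarrow> real) \<Rightarrow> (nat \<Rightarrow> real) \<Rightarrow> (real \<times> nat) measure" where
  "prior K p u = measure_of (space latent_space) (sets latent_space)
     (\<lambda>A. \<Sum>k\<in>{1..K}. ennreal (p k) * emeasure (comp_law (u k)) {b. (b, k) \<in> A})"

text \<open>Extended-real expectation E_M[g] = E[g^+] - E[g^-] (used only where at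
  least one of the two parts is finite).\<close>
definition ereal_expect :: "'a measure \<Rightarrow> ('a \<Rightarrow> real) \<Rightarrow> ereal" where
  "ereal_expect M g =
     enn2ereal (\<integral>\<^sup>+ x. ennreal (g x) \<partial>M) - enn2ereal (\<integral>\<^sup>+ x. ennreal (- g x) \<partial>M)"

definition KL :: "'a measure \<Rightarrow> 'a measure \<Rightarrow> ereal" where
  "KL q p = (if absolutely_continuous p q
             then ereal_expect q (\<lambda>x. ln (enn2real (RN_deriv p q x)))
             else \<infinity>)"

definition latent_dist :: "nat \<Rightarrow> (real \<times> nat) measure \<Rightarrow> bool" where
  "latent_dist K q \<longleftrightarrow> prob_space q \<and> sets q = sets latent_space
     \<and> emeasure q (UNIV \<times> {1..K}) = 1"

definition dists_with_mean :: "nat \<Rightarrow> real \<Rightarrow> (real \<times> nat) measure set" where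
  "dists_with_mean K bbar =
     {q. latent_dist K q \<and> integrable q fst \<and> (\<integral>x. fst x \<partial>q) = bbar}"

definition F1_NM :: "nat \<Rightarrow> (nat \<Rightarrow> real) \<Rightarrow> (nat \<Rightarrow> real) \<Rightarrow> real \<Rightarrow> real
    \<Rightarrow> (real \<times> nat) measure \<Rightarrow> ereal" where
  "F1_NM K p u s y q =
     ereal_expect q (\<lambda>x. ln (normal_density (fst x) s y)) - KL q (prior K p u)"

definition h1_NM :: "nat \<Rightarrow> (nat \<Rightarrow> real) \<Rightarrow> (nat \<Rightarrow> real) \<Rightarrow> real \<Rightarrow> real \<Rightarrow> real \<Rightarrow> ereal" where
  "h1_NM K p u s y bbar = - (SUP q \<in> dists_with_mean K bbar. F1_NM K p u s y q)"

text \<open>Penalty rho_{f,s}(bbar); Var_q(b) = E_q[(b - bbar)^2] since E_q(b) = bbar.\<close>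
definition rho_NM :: "nat \<Rightarrow> (nat \<Rightarrow> real) \<Rightarrow> (nat \<Rightarrow> real) \<Rightarrow> real \<Rightarrow> real \<Rightarrow> ereal" where
  "rho_NM K p u s bbar = (INF q \<in> dists_with_mean K bbar.
      ereal (s\<^sup>2 / 2 * ln (2 * pi * s\<^sup>2))
      + ereal (1/2) * enn2ereal (\<integral>\<^sup>+ x. ennreal ((fst x - bbar)\<^sup>2) \<partial>q)
      + ereal (s\<^sup>2) * KL q (prior K p u))"

definition marg_NM :: "nat \<Rightarrow> (nat \<Rightarrow> real) \<Rightarrow> (nat \<Rightarrow> real) \<Rightarrow> real \<Rightarrow> real \<Rightarrow> real" where
  "marg_NM K p u s y = (\<integral>x. normal_density (fst x) s y \<partial>(prior K p u))"

definition loglik_NM :: "nat \<Rightarrow> (nat \<Rightarrow> real) \<Rightarrow> (nat \<Rightarrow> real) \<Rightarrow> real \<Rightarrow> real \<Rightarrow> real" where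
  "loglik_NM K p u s y = ln (marg_NM K p u s y)"

definition postmean_NM :: "nat \<Rightarrow> (nat \<Rightarrow> real) \<Rightarrow> (nat \<Rightarrow> real) \<Rightarrow> real \<Rightarrow> real \<Rightarrow> real" where
  "postmean_NM K p u s y =
     (\<integral>x. fst x * normal_density (fst x) s y \<partial>(prior K p u)) / marg_NM K p u s y"

end

theory Submission
  imports Defs
begin


lemma comp_law_prob: "prob_space (comp_law u)"
proof (cases "u = 0")
  case True then show ?thesis by (simp add: comp_law_def prob_space_return)
next
  case False
  have "normal_density 0 u = normal_density 0 \<bar>u\<bar>"
    by (simp add: normal_density_def fun_eq_iff)
  moreover have "prob_space (density lborel (normal_density 0 \<bar>u\<bar>))"
    using False by (intro prob_space_normal_density) simp
  ultimately show ?thesis using False by (simp add: comp_law_def)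
qed

lemma sets_comp_law[simp, measurable_cong]: "sets (comp_law u) = sets borel"
  by (simp add: comp_law_def)

lemma space_comp_law[simp]: "space (comp_law u) = UNIV"
  using sets_eq_imp_space_eq[OF sets_comp_law[of u]] by simp

definition Fk :: "(nat \<Rightarrow> real) \<Rightarrow> nat \<Rightarrow> (real \<times> nat) measure" where
  "Fk u k = distr (comp_law (u k)) latent_space (\<lambda>b. (b, k))"

definition Nw :: "nat \<Rightarrow> (nat \<Rightarrow> real) \<Rightarrow> nat measure" where
  "Nw K p = density (count_space UNIV) (\<lambda>k. ennreal (if k \<in> {1..K} then p k else 0))"

lemma Fk_meas: "Fk u \<in> measurable (Nw K p) (subprob_algebra latent_space)"
proof -
  have "Fk u k \<in> space (subprob_algebra latent_space)" for k
  proof -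
    interpret prob_space "comp_law (u k)" by (rule comp_law_prob)
    have "prob_space (Fk u k)" unfolding Fk_def
      by (intro prob_space_distr) (simp add: measurable_Pair1_compose)
    then show ?thesis
      by (auto simp: space_subprob_algebra Fk_def prob_space_imp_subprob_space)
  qed
  then show ?thesis by (simp add: Nw_def)
qed

lemma prior_bind: "prior K p u = Nw K p \<bind> Fk u"
proof -
  have sp: "space (Nw K p) \<noteq> {}" by (simp add: Nw_def)
  have sets: "sets (Nw K p \<bind> Fk u) = sets latent_space"
    by (rule sets_bind) (auto simp: Fk_def sp)
  then have sps: "space (Nw K p \<bind> Fk u) = space latent_space" by (rule sets_eq_imp_space_eq)
  have "Nw K p \<bind> Fk u = measure_of (space latent_space) (sets latent_space) (emeasure (Nw K p \<bind> Fk u))"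
    using measure_of_of_measure[of "Nw K p \<bind> Fk u"] sets sps by simp
  also have "\<dots> = prior K p u"
    unfolding prior_def
  proof (rule measure_of_eq)
    show "sets latent_space \<subseteq> Pow (space latent_space)" by (rule sets.space_closed)
    fix a assume "a \<in> sigma_sets (space latent_space) (sets latent_space)"
    then have a: "a \<in> sets latent_space" by (simp add: sets.sigma_sets_eq)
    have "emeasure (Nw K p \<bind> Fk u) a = \<integral>\<^sup>+k. emeasure (Fk u k) a \<partial>Nw K p"
      by (rule emeasure_bind[OF sp Fk_meas a])
    also have "\<dots> = (\<Sum>k\<in>{1..K}. ennreal (p k) * emeasure (comp_law (u k)) {b. (b, k) \<in> a})"
    proof -
      have "\<integral>\<^sup>+k. emeasure (Fk u k) a \<partial>Nw K p
          = \<integral>\<^sup>+k. ennreal (if k \<in> {1..K} then p k else 0) * emeasure (Fk u k) a \<partial>count_space UNIV"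
        unfolding Nw_def by (subst nn_integral_density) auto
      also have "\<dots> = (\<Sum>k\<in>{1..K}. ennreal (p k) * emeasure (Fk u k) a)"
        by (subst nn_integral_count_space'[where A="{1..K}"]) (auto intro!: sum.cong)
      also have "\<dots> = (\<Sum>k\<in>{1..K}. ennreal (p k) * emeasure (comp_law (u k)) {b. (b, k) \<in> a})"
      proof (intro sum.cong refl arg_cong2[where f="(*)"])
        fix k
        have "emeasure (Fk u k) a = emeasure (comp_law (u k)) ((\<lambda>b. (b, k)) -` a \<inter> space (comp_law (u k)))"
          unfolding Fk_def using a by (intro emeasure_distr) (auto simp: measurable_Pair1_compose)
        then show "emeasure (Fk u k) a = emeasure (comp_law (u k)) {b. (b, k) \<in> a}"
          by (simp add: vimage_def space_comp_law)
      qed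
      finally show ?thesis .
    qed
    finally show "emeasure (Nw K p \<bind> Fk u) a = (\<Sum>k\<in>{1..K}. ennreal (p k) * emeasure (comp_law (u k)) {b. (b, k) \<in> a})" .
  qed
  finally show ?thesis by simp
qed

lemma sets_prior[simp, measurable_cong]: "sets (prior K p u) = sets latent_space"
  by (simp add: prior_def)

lemma nn_prior:
  assumes f[measurable]: "f \<in> borel_measurable latent_space"
  shows "(\<integral>\<^sup>+x. f x \<partial>prior K p u) = (\<Sum>k\<in>{1..K}. ennreal (p k) * (\<integral>\<^sup>+b. f (b, k) \<partial>comp_law (u k)))"
proof -
  have "(\<integral>\<^sup>+x. f x \<partial>prior K p u) = \<integral>\<^sup>+k. \<integral>\<^sup>+x. f x \<partial>Fk u k \<partial>Nw K p"
    unfolding prior_bind by (rule nn_integral_bind[OF f Fk_meas])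
  also have "\<dots> = \<integral>\<^sup>+k. ennreal (if k \<in> {1..K} then p k else 0) * (\<integral>\<^sup>+x. f x \<partial>Fk u k) \<partial>count_space UNIV"
    unfolding Nw_def by (subst nn_integral_density) auto
  also have "\<dots> = (\<Sum>k\<in>{1..K}. ennreal (p k) * (\<integral>\<^sup>+x. f x \<partial>Fk u k))"
    by (subst nn_integral_count_space'[where A="{1..K}"]) (auto intro!: sum.cong)
  also have "\<dots> = (\<Sum>k\<in>{1..K}. ennreal (p k) * (\<integral>\<^sup>+b. f (b, k) \<partial>comp_law (u k)))"
    unfolding Fk_def by (intro sum.cong refl arg_cong2[where f="(*)"], subst nn_integral_distr)
       (auto simp: measurable_Pair1_compose)
  finally show ?thesis .
qed

lemma int_prior:
  assumes f[measurable]: "f \<in> borel_measurable latent_space"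
    and p: "\<forall>k\<in>{1..K}. p k \<ge> 0"
    and ik: "\<And>k. k \<in> {1..K} \<Longrightarrow> integrable (comp_law (u k)) (\<lambda>b. f (b, k))"
  shows "integrable (prior K p u) f"
    "(\<integral>x. f x \<partial>prior K p u) = (\<Sum>k\<in>{1..K}. p k * (\<integral>b. f (b, k) \<partial>comp_law (u k)))"
proof -
  have mk[measurable]: "(\<lambda>b. f (b, k)) \<in> borel_measurable borel" for k
    by (simp add: measurable_Pair1_compose)
  have fin: "(\<integral>\<^sup>+b. g (f (b, k)) \<partial>comp_law (u k)) < \<infinity>"
    if "k \<in> {1..K}" and g: "\<And>x. g x \<le> ennreal (norm x)" for k g
  proof -
    have "(\<integral>\<^sup>+b. g (f (b, k)) \<partial>comp_law (u k)) \<le> (\<integral>\<^sup>+b. ennreal (norm (f (b, k))) \<partial>comp_law (u k))"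
      by (intro nn_integral_mono g)
    also have "\<dots> < \<infinity>" using ik[OF that(1)] by (simp add: integrable_iff_bounded)
    finally show ?thesis .
  qed
  have "(\<integral>\<^sup>+x. ennreal (norm (f x)) \<partial>prior K p u) < \<infinity>"
  proof (subst nn_prior)
    have "ennreal (p k) * (\<integral>\<^sup>+b. ennreal (norm (f (b, k))) \<partial>comp_law (u k)) < top" if "k \<in> {1..K}" for k
      using fin[OF that, of "\<lambda>x. ennreal (norm x)"] by (simp add: ennreal_mult_less_top)
    then show "(\<Sum>k\<in>{1..K}. ennreal (p k) * (\<integral>\<^sup>+b. ennreal (norm (f (b, k))) \<partial>comp_law (u k))) < \<infinity>"
      by (simp add: ennreal_sum_less_top)
  qed simp
  then show "integrable (prior K p u) f" by (simp add: integrable_iff_bounded)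
  then have "(\<integral>x. f x \<partial>prior K p u) = enn2real (\<integral>\<^sup>+x. ennreal (f x) \<partial>prior K p u) - enn2real (\<integral>\<^sup>+x. ennreal (- f x) \<partial>prior K p u)"
    by (rule real_lebesgue_integral_def)
  also have "\<dots> = (\<Sum>k\<in>{1..K}. p k * (enn2real (\<integral>\<^sup>+b. ennreal (f (b, k)) \<partial>comp_law (u k)) - enn2real (\<integral>\<^sup>+b. ennreal (- f (b, k)) \<partial>comp_law (u k))))"
  proof -
    have f1: "(\<integral>\<^sup>+b. ennreal (f (b, k)) \<partial>comp_law (u k)) < top" "(\<integral>\<^sup>+b. ennreal (- f (b, k)) \<partial>comp_law (u k)) < top"
      if "k \<in> {1..K}" for k
      using fin[OF that, of "\<lambda>x. ennreal x"] fin[OF that, of "\<lambda>x. ennreal (- x)"]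
      by (auto intro: ennreal_leI)
    show ?thesis
    apply (subst nn_prior, measurable)+
    apply (subst enn2real_sum, use f1 in \<open>simp add: ennreal_mult_less_top\<close>)+
    apply (simp add: enn2real_mult p sum_subtractf right_diff_distrib)
    done
  qed
  also have "\<dots> = (\<Sum>k\<in>{1..K}. p k * (\<integral>b. f (b, k) \<partial>comp_law (u k)))"
    by (intro sum.cong refl, subst real_lebesgue_integral_def[OF ik]) auto
  finally show "(\<integral>x. f x \<partial>prior K p u) = (\<Sum>k\<in>{1..K}. p k * (\<integral>b. f (b, k) \<partial>comp_law (u k)))" .
qed



lemma gauss_prod:
  assumes s: "0 < s" and u: "0 < u"
  shows "normal_density b s y * normal_density 0 u b =
    normal_density 0 (sqrt (s\<^sup>2 + u\<^sup>2)) y * normal_density (u\<^sup>2 * y / (s\<^sup>2 + u\<^sup>2)) (sqrt (s\<^sup>2 * u\<^sup>2 / (s\<^sup>2 + u\<^sup>2))) b"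
proof -
  define \<sigma>' \<tau>' where "\<sigma>' = s\<^sup>2" and "\<tau>' = u\<^sup>2"
  then have [simp, arith]: "0 < \<sigma>'" "0 < \<tau>'"
    using s u by simp_all
  have sqrt: "(sqrt (2 * pi * (\<sigma>' + \<tau>')) * sqrt (2 * pi * (\<sigma>' * \<tau>') / (\<sigma>' + \<tau>'))) =
    (sqrt (2 * pi * \<sigma>') * sqrt (2 * pi * \<tau>'))"
    by (subst power_eq_iff_eq_base[symmetric, where n=2])
       (simp_all add: real_sqrt_mult[symmetric] power2_eq_square)
  show ?thesis
    using s u
    apply (simp add: normal_density_def \<sigma>'_def[symmetric] \<tau>'_def[symmetric] sqrt mult_exp_exp)
    apply (simp add: divide_simps power2_eq_square)
    apply (simp add: algebra_simps)
    done
qed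

definition nd :: "real \<Rightarrow> real \<Rightarrow> real \<Rightarrow> real" where
  "nd s u y = normal_density 0 (sqrt (s\<^sup>2 + u\<^sup>2)) y"

lemma comp_int:
  assumes s: "0 < s" and u: "0 \<le> u"
  shows "integrable (comp_law u) (\<lambda>b. normal_density b s y)"
    "(\<integral>b. normal_density b s y \<partial>comp_law u) = nd s u y"
    "integrable (comp_law u) (\<lambda>b. b * normal_density b s y)"
    "(\<integral>b. b * normal_density b s y \<partial>comp_law u) = u\<^sup>2 / (s\<^sup>2 + u\<^sup>2) * y * nd s u y"
proof -
  have m1[measurable]: "(\<lambda>b. normal_density b s y) \<in> borel_measurable borel"
    by (simp add: normal_density_def)
  have "integrable (comp_law u) (\<lambda>b. normal_density b s y) \<and> (\<integral>b. normal_density b s y \<partial>comp_law u) = nd s u y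
    \<and> integrable (comp_law u) (\<lambda>b. b * normal_density b s y) \<and> (\<integral>b. b * normal_density b s y \<partial>comp_law u) = u\<^sup>2 / (s\<^sup>2 + u\<^sup>2) * y * nd s u y"
  proof (cases "u = 0")
    case True
    then show ?thesis using s
      by (simp add: comp_law_def integral_return integrable_iff_bounded nn_integral_return nd_def normal_density_def)
  next
    case False
    then have u: "0 < u" using u by simp
    define \<mu> where "\<mu> = u\<^sup>2 * y / (s\<^sup>2 + u\<^sup>2)"
    define \<tau> where "\<tau> = sqrt (s\<^sup>2 * u\<^sup>2 / (s\<^sup>2 + u\<^sup>2))"
    have tau: "0 < \<tau>" using s u by (simp add: \<tau>_def add_pos_pos)
    have eq: "normal_density 0 u b * normal_density b s y = nd s u y * normal_density \<mu> \<tau> b" for b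
      using gauss_prod[OF s u, of b y] by (simp add: \<mu>_def \<tau>_def nd_def mult.commute)
    have eq2: "normal_density 0 u b * (b * normal_density b s y) = nd s u y * (normal_density \<mu> \<tau> b * b)" for b
      using eq[of b] by (simp add: algebra_simps)
    have d: "comp_law u = density lborel (normal_density 0 u)" using False by (simp add: comp_law_def)
    show ?thesis
      unfolding d
      apply (simp add: integrable_density integral_density eq eq2 normal_density_nonneg)
      apply (simp add: integrable_normal_moment_nz_1 integral_normal_moment_nz_1 tau)
      apply (simp add: \<mu>_def)
      done
  qed
  then show "integrable (comp_law u) (\<lambda>b. normal_density b s y)"
    "(\<integral>b. normal_density b s y \<partial>comp_law u) = nd s u y"
    "integrable (comp_law u) (\<lambda>b. b * normal_density b s y)"
    "(\<integral>b. b * normal_density b s y \<partial>comp_law u) = u\<^sup>2 / (s\<^sup>2 + u\<^sup>2) * y * nd s u y" by auto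
qed



lemma nd_eq: "0 < s \<Longrightarrow> nd s u y = 1 / sqrt (2 * pi * (s\<^sup>2 + u\<^sup>2)) * exp (- y\<^sup>2 / (2 * (s\<^sup>2 + u\<^sup>2)))"
  by (simp add: nd_def normal_density_def add_nonneg_nonneg)

lemma nd_pos: "0 < s \<Longrightarrow> 0 < nd s u y"
  by (simp add: nd_def normal_density_pos add_pos_nonneg)

lemma gauss_deriv_aux:
  assumes v: "0 < (v::real)"
  shows "((\<lambda>y. c * exp (- y\<^sup>2 / (2 * v))) has_real_derivative (- y / v * (c * exp (- y\<^sup>2 / (2 * v))))) (at y)"
  using v by (auto intro!: derivative_eq_intros simp: field_simps power2_eq_square)

lemma nd_deriv:
  assumes s: "0 < s"
  shows "((nd s u) has_real_derivative (- y / (s\<^sup>2 + u\<^sup>2) * nd s u y)) (at y)"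
proof -
  have v: "0 < s\<^sup>2 + u\<^sup>2" using s by (simp add: add_pos_nonneg)
  have e: "nd s u = (\<lambda>y. 1 / sqrt (2 * pi * (s\<^sup>2 + u\<^sup>2)) * exp (- y\<^sup>2 / (2 * (s\<^sup>2 + u\<^sup>2))))"
    using nd_eq[OF s] by (simp add: fun_eq_iff)
  show ?thesis unfolding e
    using gauss_deriv_aux[OF v, of "1 / sqrt (2 * pi * (s\<^sup>2 + u\<^sup>2))" y] by simp
qed

locale nmc =
  fixes K :: nat and p u :: "nat \<Rightarrow> real" and s :: real
  assumes K: "K \<ge> 1"
    and p_nonneg: "\<forall>k\<in>{1..K}. p k \<ge> 0"
    and p_sum: "(\<Sum>k\<in>{1..K}. p k) = 1"
    and u_nonneg: "\<forall>k\<in>{1..K}. u k \<ge> 0"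
    and nondeg: "\<exists>k\<in>{1..K}. p k > 0 \<and> u k > 0"
    and s: "s > 0"
begin

definition "vv k = s\<^sup>2 + (u k)\<^sup>2"
definition "mm y = (\<Sum>k\<in>{1..K}. p k * nd s (u k) y)"
definition "nn y = (\<Sum>k\<in>{1..K}. p k * ((u k)\<^sup>2 / vv k) * y * nd s (u k) y)"
definition "SS y = nn y / mm y"

lemma vv_pos: "0 < vv k" using s by (simp add: vv_def add_pos_nonneg)

lemma mm_pos: "0 < mm y"
proof -
  obtain k where k: "k \<in> {1..K}" "p k > 0" using nondeg by auto
  have "0 < p k * nd s (u k) y" using k nd_pos[OF s] by simp
  also have "\<dots> \<le> mm y" unfolding mm_def
    using k p_nonneg nd_pos[OF s] by (intro member_le_sum) (auto intro!: mult_nonneg_nonneg simp: less_imp_le)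
  finally show ?thesis .
qed

lemma mm_deriv: "(mm has_real_derivative (\<Sum>k\<in>{1..K}. p k * (- y / vv k * nd s (u k) y))) (at y)"
  unfolding mm_def[abs_def] vv_def
  by (rule DERIV_sum, rule DERIV_cmult, rule nd_deriv[OF s])

lemma nn_deriv: "(nn has_real_derivative (\<Sum>k\<in>{1..K}. p k * ((u k)\<^sup>2 / vv k) * (nd s (u k) y + y * (- y / vv k * nd s (u k) y)))) (at y)"
  unfolding nn_def[abs_def] vv_def
proof (rule DERIV_sum)
  fix k
  have "((\<lambda>y. y * nd s (u k) y) has_real_derivative (1 * nd s (u k) y + y * (- y / (s\<^sup>2 + (u k)\<^sup>2) * nd s (u k) y))) (at y)"
    using DERIV_mult[OF DERIV_ident nd_deriv[OF s, of "u k" y]] by (simp add: algebra_simps)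
  from DERIV_cmult[OF this, of "p k * ((u k)\<^sup>2 / (s\<^sup>2 + (u k)\<^sup>2))"]
  show "((\<lambda>y. p k * ((u k)\<^sup>2 / (s\<^sup>2 + (u k)\<^sup>2)) * y * nd s (u k) y) has_real_derivative
     p k * ((u k)\<^sup>2 / (s\<^sup>2 + (u k)\<^sup>2)) * (nd s (u k) y + y * (- y / (s\<^sup>2 + (u k)\<^sup>2) * nd s (u k) y))) (at y)"
    by (simp add: mult.assoc)
qed

lemma SS_deriv_pos: "\<exists>D>0. (SS has_real_derivative D) (at y)"
proof -
  define a where "a k = p k * nd s (u k) y" for k
  define A where "A = (\<Sum>k\<in>{1..K}. a k)"
  define B where "B = (\<Sum>k\<in>{1..K}. a k / vv k)"
  define C where "C = (\<Sum>k\<in>{1..K}. a k / (vv k)\<^sup>2)"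
  define W where "W = (\<Sum>k\<in>{1..K}. a k * ((u k)\<^sup>2 / vv k))"
  have a_nn: "k \<in> {1..K} \<Longrightarrow> 0 \<le> a k" for k
    using p_nonneg order_less_imp_le[OF nd_pos[OF s]] by (auto simp: a_def intro!: mult_nonneg_nonneg)
  have aw: "a k * ((u k)\<^sup>2 / vv k) = a k - s\<^sup>2 * (a k / vv k)" for k
    using vv_pos[of k] s unfolding vv_def by (simp add: divide_simps) (simp add: algebra_simps)
  have W_eq: "W = A - s\<^sup>2 * B"
    unfolding W_def A_def B_def aw by (simp add: sum_subtractf sum_distrib_left)
  have aw2: "a k * ((u k)\<^sup>2 / vv k) / vv k = a k / vv k - s\<^sup>2 * (a k / (vv k)\<^sup>2)" for k
    unfolding aw by (simp add: diff_divide_distrib power2_eq_square)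
  have W2_eq: "(\<Sum>k\<in>{1..K}. a k * ((u k)\<^sup>2 / vv k) / vv k) = B - s\<^sup>2 * C"
    unfolding B_def C_def aw2 by (simp add: sum_subtractf sum_distrib_left)
  have W_pos: "0 < W"
  proof -
    obtain k where k: "k \<in> {1..K}" "p k > 0" "u k > 0" using nondeg by auto
    have "0 < a k * ((u k)\<^sup>2 / vv k)" using k nd_pos[OF s, of "u k" y] vv_pos[of k] by (simp add: a_def)
    also have "\<dots> \<le> W" unfolding W_def
      using k a_nn vv_pos by (intro member_le_sum) (auto intro!: mult_nonneg_nonneg divide_nonneg_pos)
    finally show ?thesis .
  qed
  have CS: "B\<^sup>2 \<le> A * C"
  proof -
    have "B = (\<Sum>k\<in>{1..K}. sqrt (a k) * (sqrt (a k) / vv k))"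
      unfolding B_def using a_nn by (intro sum.cong) (auto simp: real_sqrt_mult[symmetric])
    also have "\<dots>\<^sup>2 \<le> (\<Sum>k\<in>{1..K}. (sqrt (a k))\<^sup>2) * (\<Sum>k\<in>{1..K}. (sqrt (a k) / vv k)\<^sup>2)"
      by (rule Cauchy_Schwarz_ineq_sum)
    also have "\<dots> = A * C"
      unfolding A_def C_def using a_nn by (intro arg_cong2[where f="(*)"] sum.cong) (auto simp: power_divide)
    finally show ?thesis by simp
  qed
  have mmA: "mm y = A" by (simp add: mm_def A_def a_def)
  have nnW: "nn y = y * W" by (simp add: nn_def W_def a_def sum_distrib_left algebra_simps)
  have d1: "(\<Sum>k\<in>{1..K}. p k * (- y / vv k * nd s (u k) y)) = - y * B"
    by (simp add: B_def a_def sum_distrib_left algebra_simps)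
  have d2: "(\<Sum>k\<in>{1..K}. p k * ((u k)\<^sup>2 / vv k) * (nd s (u k) y + y * (- y / vv k * nd s (u k) y)))
      = W - y\<^sup>2 * (\<Sum>k\<in>{1..K}. a k * ((u k)\<^sup>2 / vv k) / vv k)"
    by (simp add: W_def a_def sum_distrib_left sum_subtractf[symmetric] power2_eq_square algebra_simps)
  have der: "(SS has_real_derivative ((W - y\<^sup>2 * (B - s\<^sup>2 * C)) * A - y * W * (- y * B)) / (A * A)) (at y)"
    unfolding SS_def[abs_def]
    using DERIV_divide[OF nn_deriv mm_deriv, of y] mm_pos[of y]
    by (simp only: d1 d2 W2_eq mmA nnW)
  have A_pos: "0 < A" using mm_pos[of y] mmA by simp
  have "(W - y\<^sup>2 * (B - s\<^sup>2 * C)) * A - y * W * (- y * B) = W * A + y\<^sup>2 * s\<^sup>2 * (A * C - B\<^sup>2)"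
    by (simp add: W_eq power2_eq_square algebra_simps)
  also have "\<dots> > 0"
    using W_pos A_pos CS by (intro add_pos_nonneg mult_nonneg_nonneg) auto
  finally have "0 < ((W - y\<^sup>2 * (B - s\<^sup>2 * C)) * A - y * W * (- y * B)) / (A * A)"
    using A_pos by simp
  with der show ?thesis by blast
qed

lemma SS_strict_mono: "x < y \<Longrightarrow> SS x < SS y"
  by (rule DERIV_pos_imp_increasing[of x y SS]) (use SS_deriv_pos in blast)+

lemma SS_cont: "isCont SS y"
  using SS_deriv_pos[of y] DERIV_isCont by blast

end



lemma envelope_deriv:
  fixes R S L :: "real \<Rightarrow> real"
  assumes mono: "\<And>x y. x < y \<Longrightarrow> S x < S y"
    and cont: "\<And>y. isCont S y"
    and eq: "\<And>y. R (S y) = L y - 1/2 * (y - S y)\<^sup>2"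
    and low: "\<And>y y'. R (S y') \<ge> L y - 1/2 * (y - S y')\<^sup>2"
  shows "(R has_real_derivative (z - S z)) (at (S z))"
proof -
  define b0 where "b0 = S z"
  have key: "\<exists>d>0. \<forall>b. b \<noteq> b0 \<and> \<bar>b - b0\<bar> < d \<longrightarrow> \<bar>(R b - R b0) / (b - b0) - (z - b0)\<bar> < e"
    if e: "e > 0" for e
  proof -
    define \<eta> where "\<eta> = e / 2"
    have eta: "\<eta> > 0" using e by (simp add: \<eta>_def)
    have l: "S (z - \<eta>) < b0" and r: "b0 < S (z + \<eta>)" using mono eta by (auto simp: b0_def)
    define d where "d = min (min (b0 - S (z - \<eta>)) (S (z + \<eta>) - b0)) e"
    have d: "d > 0" using l r e by (simp add: d_def)
    show ?thesis
    proof (intro exI[of _ d] conjI allI impI d)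
      fix b assume b: "b \<noteq> b0 \<and> \<bar>b - b0\<bar> < d"
      have "S (z - \<eta>) \<le> b" "b \<le> S (z + \<eta>)" using b by (auto simp: d_def abs_less_iff)
      then obtain y where y: "z - \<eta> \<le> y" "y \<le> z + \<eta>" "S y = b"
        using IVT[of S "z - \<eta>" b "z + \<eta>"] cont eta by auto
      define h where "h = b - b0"
      have h: "h \<noteq> 0" "\<bar>h\<bar> < e" using b by (auto simp: h_def d_def)
      have Rb: "R b = L y - 1/2 * (y - b)\<^sup>2" using eq[of y] y by simp
      have Rb0: "R b0 = L z - 1/2 * (z - b0)\<^sup>2" using eq[of z] by (simp add: b0_def)
      have l1: "R b \<ge> L z - 1/2 * (z - b)\<^sup>2" using low[of z y] y by simp
      have l2: "R b0 \<ge> L y - 1/2 * (y - b0)\<^sup>2" using low[of y z] by (simp add: b0_def)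
      define \<alpha> where "\<alpha> = z - (b + b0) / 2"
      define \<beta> where "\<beta> = y - (b + b0) / 2"
      have lo: "h * \<alpha> \<le> R b - R b0"
        using l1 Rb0 by (simp add: h_def \<alpha>_def power2_eq_square algebra_simps diff_divide_distrib)
      have hi: "R b - R b0 \<le> h * \<beta>"
        using l2 Rb by (simp add: h_def \<beta>_def power2_eq_square algebra_simps diff_divide_distrib)
      define Q where "Q = (R b - R b0) / h"
      have mnx: "min \<alpha> \<beta> \<le> Q \<and> Q \<le> max \<alpha> \<beta>"
      proof (cases "h > 0")
        case True
        then have "\<alpha> \<le> Q" "Q \<le> \<beta>" using lo hi by (auto simp: Q_def pos_le_divide_eq pos_divide_le_eq mult.commute)
        then show ?thesis by linarith
      next
        case False
        then have "h < 0" using h by simp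
        then have "\<beta> \<le> Q" "Q \<le> \<alpha>" using lo hi by (auto simp: Q_def neg_le_divide_eq neg_divide_le_eq mult.commute)
        then show ?thesis by linarith
      qed
      have hb1: "b - b0 < e" "b0 - b < e" using h(2) by (auto simp: h_def)
      have "\<bar>\<alpha> - (z - b0)\<bar> < e"
        unfolding \<alpha>_def abs_less_iff using hb1 e by (auto simp: field_simps)
      moreover have "\<bar>\<beta> - (z - b0)\<bar> < e"
        unfolding \<beta>_def abs_less_iff using hb1 e y(1,2) by (auto simp: field_simps \<eta>_def)
      ultimately have "\<bar>Q - (z - b0)\<bar> < e" using mnx by (auto simp: abs_less_iff)
      then show "\<bar>(R b - R b0) / (b - b0) - (z - b0)\<bar> < e" by (simp add: Q_def h_def)
    qed
  qed
  have "((\<lambda>b. (R b - R b0) / (b - b0)) \<longlongrightarrow> (z - b0)) (at b0)"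
    unfolding LIM_eq using key by (simp add: dist_real_def)
  then show ?thesis
    by (simp add: has_field_derivative_iff b0_def)
qed



context nmc begin

abbreviation "P \<equiv> prior K p u"

lemma g_meas[measurable]: "(\<lambda>x. normal_density (fst x) s y) \<in> borel_measurable latent_space"
  by (simp add: normal_density_def)

lemma space_P[simp]: "space P = UNIV"
  using sets_eq_imp_space_eq[OF sets_prior[of K p u]] by (simp add: space_pair_measure)

lemma P_fun: "emeasure P A = (\<Sum>k\<in>{1..K}. ennreal (p k) * emeasure (comp_law (u k)) {b. (b, k) \<in> A})"
  if "A \<in> sets latent_space" for A
proof -
  have "emeasure P A = \<integral>\<^sup>+x. indicator A x \<partial>P" using that by simp
  also have "\<dots> = (\<Sum>k\<in>{1..K}. ennreal (p k) * (\<integral>\<^sup>+b. indicator A (b, k) \<partial>comp_law (u k)))"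
    using that by (intro nn_prior) simp
  also have "\<dots> = (\<Sum>k\<in>{1..K}. ennreal (p k) * emeasure (comp_law (u k)) {b. (b, k) \<in> A})"
  proof (intro sum.cong refl arg_cong2[where f="(*)"])
    fix k
    have "(\<lambda>b. (b, k)) \<in> measurable borel latent_space" by simp
    then have "(\<lambda>b. (b, k)) -` A \<inter> space borel \<in> sets borel" using that by (rule measurable_sets)
    then have m: "{b. (b, k) \<in> A} \<in> sets borel" by (simp add: vimage_def)
    have "(\<integral>\<^sup>+b. indicator A (b, k) \<partial>comp_law (u k)) = (\<integral>\<^sup>+b. indicator {b. (b, k) \<in> A} b \<partial>comp_law (u k))"
      by (intro nn_integral_cong) (simp add: indicator_def)
    then show "(\<integral>\<^sup>+b. indicator A (b, k) \<partial>comp_law (u k)) = emeasure (comp_law (u k)) {b. (b, k) \<in> A}"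
      using m by simp
  qed
  finally show ?thesis .
qed

lemma P_one: "emeasure P (UNIV \<times> {1..K}) = 1" and P_space: "emeasure P UNIV = 1"
proof -
  have "emeasure P A = 1" if "A \<in> sets latent_space" "UNIV \<times> {1..K} \<subseteq> A" for A
  proof -
    have "emeasure P A = (\<Sum>k\<in>{1..K}. ennreal (p k) * 1)"
      unfolding P_fun[OF that(1)]
    proof (intro sum.cong refl arg_cong2[where f="(*)"])
      fix k assume "k \<in> {1..K}"
      then have "{b. (b, k) \<in> A} = UNIV" using that by auto
      then show "emeasure (comp_law (u k)) {b. (b, k) \<in> A} = 1"
        using prob_space.emeasure_space_1[OF comp_law_prob[of "u k"]] by simp
    qed
    also have "\<dots> = 1" using p_nonneg p_sum by (simp only: mult_1_right, subst sum_ennreal) auto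
    finally show ?thesis .
  qed
  moreover have "UNIV \<in> sets latent_space"
    using sets.top[of latent_space] by (simp add: space_pair_measure)
  ultimately show "emeasure P (UNIV \<times> {1..K}) = 1" "emeasure P UNIV = 1"
    by auto
qed

lemma prob_P: "prob_space P"
  by (rule prob_spaceI) (simp add: P_space)

lemma marg_eq: "marg_NM K p u s y = mm y" and int_g: "integrable P (\<lambda>x. normal_density (fst x) s y)"
proof -
  have ik: "integrable (comp_law (u k)) (\<lambda>b. normal_density (fst (b, k)) s y)" if "k \<in> {1..K}" for k
    using comp_int(1)[OF s, of "u k" y] u_nonneg that by simp
  show "integrable P (\<lambda>x. normal_density (fst x) s y)"
    by (rule int_prior(1)[OF g_meas p_nonneg ik])
  have "marg_NM K p u s y = (\<Sum>k\<in>{1..K}. p k * (\<integral>b. normal_density (fst (b, k)) s y \<partial>comp_law (u k)))"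
    unfolding marg_NM_def by (rule int_prior(2)[OF g_meas p_nonneg ik])
  then show "marg_NM K p u s y = mm y"
    unfolding mm_def using comp_int(2)[OF s] u_nonneg by (auto intro!: sum.cong)
qed

lemma num_eq: "(\<integral>x. fst x * normal_density (fst x) s y \<partial>P) = nn y"
  and int_bg: "integrable P (\<lambda>x. fst x * normal_density (fst x) s y)"
proof -
  have ik: "integrable (comp_law (u k)) (\<lambda>b. fst (b, k) * normal_density (fst (b, k)) s y)" if "k \<in> {1..K}" for k
    using comp_int(3)[OF s, of "u k" y] u_nonneg that by simp
  have m: "(\<lambda>x. fst x * normal_density (fst x) s y) \<in> borel_measurable latent_space" by measurable
  show "integrable P (\<lambda>x. fst x * normal_density (fst x) s y)"
    by (rule int_prior(1)[OF m p_nonneg ik])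
  have "(\<integral>x. fst x * normal_density (fst x) s y \<partial>P) = (\<Sum>k\<in>{1..K}. p k * (\<integral>b. fst (b, k) * normal_density (fst (b, k)) s y \<partial>comp_law (u k)))"
    by (rule int_prior(2)[OF m p_nonneg ik])
  then show "(\<integral>x. fst x * normal_density (fst x) s y \<partial>P) = nn y"
    unfolding nn_def using comp_int(4)[OF s] u_nonneg by (auto intro!: sum.cong simp: vv_def)
qed

lemma postmean_eq: "postmean_NM K p u s y = SS y"
  by (simp add: postmean_NM_def num_eq marg_eq SS_def)

lemma loglik_eq: "loglik_NM K p u s = (\<lambda>y. ln (mm y))"
  by (simp add: fun_eq_iff loglik_NM_def marg_eq)

end



lemma enn2ereal_fin: "(a::ennreal) < top \<Longrightarrow> enn2ereal a = ereal (enn2real a)"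
  by (cases a rule: ennreal_cases) auto

lemma ee_integrable:
  assumes "integrable q f"
  shows "ereal_expect q f = ereal (\<integral>x. f x \<partial>q)"
proof -
  have f1: "(\<integral>\<^sup>+x. ennreal (f x) \<partial>q) < top"
  proof -
    have "(\<integral>\<^sup>+x. ennreal (f x) \<partial>q) \<le> (\<integral>\<^sup>+x. ennreal (norm (f x)) \<partial>q)"
      by (intro nn_integral_mono ennreal_leI) auto
    also have "\<dots> < top" using assms by (simp add: integrable_iff_bounded)
    finally show ?thesis .
  qed
  have f2: "(\<integral>\<^sup>+x. ennreal (- f x) \<partial>q) < top"
  proof -
    have "(\<integral>\<^sup>+x. ennreal (- f x) \<partial>q) \<le> (\<integral>\<^sup>+x. ennreal (norm (f x)) \<partial>q)"
      by (intro nn_integral_mono ennreal_leI) auto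
    also have "\<dots> < top" using assms by (simp add: integrable_iff_bounded)
    finally show ?thesis .
  qed
  show ?thesis
    unfolding ereal_expect_def real_lebesgue_integral_def[OF assms]
    by (simp add: enn2ereal_fin f1 f2)
qed

lemma ee_cong_AE:
  "(AE x in q. f x = g x) \<Longrightarrow> ereal_expect q f = ereal_expect q g"
  unfolding ereal_expect_def
  by (intro arg_cong2[where f="(-)"] arg_cong[where f=enn2ereal] nn_integral_cong_AE) auto

lemma ee_const_minus:
  assumes q: "prob_space q" and w[measurable]: "w \<in> borel_measurable q" and wn: "\<And>x. 0 \<le> w x"
  shows "ereal_expect q (\<lambda>x. c - w x) = ereal c - enn2ereal (\<integral>\<^sup>+x. ennreal (w x) \<partial>q)"
proof (cases "(\<integral>\<^sup>+x. ennreal (w x) \<partial>q) < top")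
  case True
  interpret prob_space q by fact
  have iw: "integrable q w" using True wn by (simp add: integrable_iff_bounded)
  have "ereal_expect q (\<lambda>x. c - w x) = ereal (\<integral>x. c - w x \<partial>q)"
    by (rule ee_integrable) (use iw in auto)
  also have "(\<integral>x. c - w x \<partial>q) = c - (\<integral>x. w x \<partial>q)"
    using iw by (simp add: prob_space)
  also have "(\<integral>\<^sup>+x. ennreal (w x) \<partial>q) = ennreal (\<integral>x. w x \<partial>q)"
    using iw wn by (intro nn_integral_eq_integral) auto
  ultimately show ?thesis using wn by (simp add: integral_nonneg)
next
  case False
  interpret prob_space q by fact
  have inf: "(\<integral>\<^sup>+x. ennreal (w x) \<partial>q) = top" using False top.not_eq_extremum by blast
  have p1: "(\<integral>\<^sup>+x. ennreal (c - w x) \<partial>q) < top"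
  proof -
    have "(\<integral>\<^sup>+x. ennreal (c - w x) \<partial>q) \<le> (\<integral>\<^sup>+x. ennreal \<bar>c\<bar> \<partial>q)"
    proof (intro nn_integral_mono ennreal_leI)
      fix x show "c - w x \<le> \<bar>c\<bar>" using wn[of x] by linarith
    qed
    also have "\<dots> < top" by (simp add: emeasure_space_1)
    finally show ?thesis .
  qed
  have p2: "(\<integral>\<^sup>+x. ennreal (- (c - w x)) \<partial>q) = top"
  proof -
    have "(\<integral>\<^sup>+x. ennreal (w x) \<partial>q) \<le> (\<integral>\<^sup>+x. ennreal (- (c - w x)) + ennreal \<bar>c\<bar> \<partial>q)"
    proof (intro nn_integral_mono)
      fix x
      show "ennreal (w x) \<le> ennreal (- (c - w x)) + ennreal \<bar>c\<bar>"
      proof (cases "c \<le> w x")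
        case True
        then have "ennreal (- (c - w x)) + ennreal \<bar>c\<bar> = ennreal (- (c - w x) + \<bar>c\<bar>)"
          by (intro ennreal_plus[symmetric]) auto
        then show ?thesis by (auto intro!: ennreal_leI)
      next
        case False
        then have "ennreal (w x) \<le> ennreal \<bar>c\<bar>" by (intro ennreal_leI) auto
        then show ?thesis by (simp add: add_increasing)
      qed
    qed
    also have "\<dots> = (\<integral>\<^sup>+x. ennreal (- (c - w x)) \<partial>q) + ennreal \<bar>c\<bar>"
      by (subst nn_integral_add) (auto simp: emeasure_space_1)
    finally show ?thesis using inf by (auto simp: top_unique)
  qed
  show ?thesis unfolding ereal_expect_def using inf p2 p1
    by (simp add: enn2ereal_fin)
qed



lemma sq_sum_le: "((a::real) + b)\<^sup>2 \<le> 2 * a\<^sup>2 + 2 * b\<^sup>2"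
proof -
  have "0 \<le> (a - b)\<^sup>2" by simp
  then show ?thesis by (simp add: power2_eq_square algebra_simps)
qed

lemma second_moment:
  fixes q :: "(real \<times> nat) measure"
  assumes q: "prob_space q" and sq[measurable_cong]: "sets q = sets latent_space"
    and i: "integrable q fst" and mean: "(\<integral>x. fst x \<partial>q) = bb"
  shows "(\<integral>\<^sup>+x. ennreal ((y - fst x)\<^sup>2) \<partial>q) = ennreal ((y - bb)\<^sup>2) + (\<integral>\<^sup>+x. ennreal ((fst x - bb)\<^sup>2) \<partial>q)"
proof (cases "(\<integral>\<^sup>+x. ennreal ((fst x - bb)\<^sup>2) \<partial>q) < top")
  case True
  interpret prob_space q by fact
  have i2: "integrable q (\<lambda>x. (fst x - bb)\<^sup>2)"
    using True by (simp add: integrable_iff_bounded)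
  have eq: "(y - fst x)\<^sup>2 = (fst x - bb)\<^sup>2 + (2 * (bb - y) * fst x - 2 * (bb - y) * bb) + (y - bb)\<^sup>2" for x
    by (simp add: power2_eq_square algebra_simps)
  have i3: "integrable q (\<lambda>x. (y - fst x)\<^sup>2)"
    unfolding eq using i i2 by auto
  have "(\<integral>x. (y - fst x)\<^sup>2 \<partial>q) = (\<integral>x. (fst x - bb)\<^sup>2 \<partial>q) + (y - bb)\<^sup>2"
    unfolding eq using i i2 mean by (simp add: prob_space)
  moreover have "(\<integral>\<^sup>+x. ennreal ((y - fst x)\<^sup>2) \<partial>q) = ennreal (\<integral>x. (y - fst x)\<^sup>2 \<partial>q)"
    using i3 by (intro nn_integral_eq_integral) auto
  moreover have "(\<integral>\<^sup>+x. ennreal ((fst x - bb)\<^sup>2) \<partial>q) = ennreal (\<integral>x. (fst x - bb)\<^sup>2 \<partial>q)"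
    using i2 by (intro nn_integral_eq_integral) auto
  ultimately show ?thesis
    by (simp add: ennreal_plus integral_nonneg add.commute)
next
  case False
  interpret prob_space q by fact
  have inf: "(\<integral>\<^sup>+x. ennreal ((fst x - bb)\<^sup>2) \<partial>q) = top" using False top.not_eq_extremum by blast
  have "(\<integral>\<^sup>+x. ennreal ((fst x - bb)\<^sup>2) \<partial>q) \<le> (\<integral>\<^sup>+x. 2 * ennreal ((y - fst x)\<^sup>2) + ennreal (2 * (y - bb)\<^sup>2) \<partial>q)"
  proof (intro nn_integral_mono)
    fix x
    have "(fst x - bb)\<^sup>2 \<le> 2 * (y - fst x)\<^sup>2 + 2 * (y - bb)\<^sup>2"
      using sq_sum_le[of "fst x - y" "y - bb"] by (simp add: power2_commute)
    then show "ennreal ((fst x - bb)\<^sup>2) \<le> 2 * ennreal ((y - fst x)\<^sup>2) + ennreal (2 * (y - bb)\<^sup>2)"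
    proof -
      have e1: "2 * ennreal ((y - fst x)\<^sup>2) = ennreal (2 * (y - fst x)\<^sup>2)"
        by (simp add: ennreal_mult)
      have e2: "ennreal (2 * (y - fst x)\<^sup>2) + ennreal (2 * (y - bb)\<^sup>2) = ennreal (2 * (y - fst x)\<^sup>2 + 2 * (y - bb)\<^sup>2)"
        by (intro ennreal_plus[symmetric]) auto
      show ?thesis unfolding e1 e2 by (rule ennreal_leI) fact
    qed
  qed
  also have "\<dots> = 2 * (\<integral>\<^sup>+x. ennreal ((y - fst x)\<^sup>2) \<partial>q) + ennreal (2 * (y - bb)\<^sup>2)"
    by (subst nn_integral_add) (auto simp: nn_integral_cmult emeasure_space_1)
  finally have "(\<integral>\<^sup>+x. ennreal ((y - fst x)\<^sup>2) \<partial>q) = top"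
    using inf by (auto simp: top_unique ennreal_mult_eq_top_iff)
  then show ?thesis using inf by simp
qed



lemma xlnx_bound: "(t::ennreal) * ennreal (- ln (enn2real t)) \<le> 1"
proof (cases t rule: ennreal_cases)
  case (real r)
  show ?thesis
  proof (cases "r \<le> 1 \<and> 0 < r")
    case True
    have "ln (1 / r) \<le> 1 / r - 1" using True by (intro ln_le_minus_one) auto
    then have "- ln r \<le> 1 / r - 1" using True by (simp add: ln_div)
    then have "r * (- ln r) \<le> r * (1 / r - 1)" using True by (intro mult_left_mono) auto
    also have "\<dots> \<le> 1" using True by (simp add: field_simps)
    finally have "r * (- ln r) \<le> 1" .
    moreover have "0 \<le> - ln r" using True by simp
    ultimately show ?thesis using real by (simp add: ennreal_mult[symmetric] ennreal_leI del: ennreal_neg)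
  next
    case False
    then have "r = 0 \<or> 1 < r" using real by auto
    then show ?thesis using real by (auto simp: ennreal_neg)
  qed
next
  case top then show ?thesis by simp
qed

lemma KL_neg_part:
  assumes P: "prob_space P" and sq: "sets q = sets P" and ac: "absolutely_continuous P q"
  shows "(\<integral>\<^sup>+x. ennreal (- ln (enn2real (RN_deriv P q x))) \<partial>q) \<le> 1"
proof -
  interpret prob_space P by fact
  have "(\<integral>\<^sup>+x. ennreal (- ln (enn2real (RN_deriv P q x))) \<partial>q)
      = (\<integral>\<^sup>+x. RN_deriv P q x * ennreal (- ln (enn2real (RN_deriv P q x))) \<partial>P)"
    by (rule RN_deriv_nn_integral[OF ac sq]) measurable
  also have "\<dots> \<le> (\<integral>\<^sup>+x. 1 \<partial>P)"
    by (intro nn_integral_mono xlnx_bound)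
  also have "\<dots> = 1" by (simp add: emeasure_space_1)
  finally show ?thesis .
qed

lemma ereal_nn_minus_fin: "0 \<le> (x::ereal) \<Longrightarrow> x - ereal r \<noteq> -\<infinity>"
  by (cases x) auto

lemma KL_not_minf:
  assumes P: "prob_space P" and sq: "sets q = sets P"
  shows "KL q P \<noteq> -\<infinity>"
proof (cases "absolutely_continuous P q")
  case True
  have "(\<integral>\<^sup>+x. ennreal (- ln (enn2real (RN_deriv P q x))) \<partial>q) < top"
    using KL_neg_part[OF P sq True] by (simp add: le_less_trans)
  then show ?thesis using True
    by (simp add: KL_def ereal_expect_def enn2ereal_fin ereal_nn_minus_fin)
next
  case False then show ?thesis by (simp add: KL_def)
qed



lemma ereal_alg:
  fixes V Kl :: ereal
  assumes sg: "0 < \<sigma>" and V: "0 \<le> V" and Kl: "Kl \<noteq> -\<infinity>"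
  shows "- ((ereal (- (L / 2)) - ereal (1 / (2 * \<sigma>)) * (ereal d + V)) - Kl)
     = ereal (1 / (2 * \<sigma>) * d) + ereal (1 / \<sigma>) * (ereal (\<sigma> / 2 * L) + ereal (1 / 2) * V + ereal \<sigma> * Kl)"
  using V Kl sg
  by (cases V; cases Kl) (auto simp: field_simps)

lemma mono_bij_INF:
  fixes \<phi> \<psi> :: "ereal \<Rightarrow> ereal"
  assumes m1: "mono \<phi>" and m2: "mono \<psi>" and inv: "\<And>x. \<psi> (\<phi> x) = x" "\<And>x. \<phi> (\<psi> x) = x"
  shows "(INF q\<in>A. \<phi> (G q)) = \<phi> (INF q\<in>A. G q)"
proof (rule antisym)
  show "\<phi> (INF q\<in>A. G q) \<le> (INF q\<in>A. \<phi> (G q))"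
    by (intro INF_greatest monoD[OF m1] INF_lower)
  have "\<psi> (INF q\<in>A. \<phi> (G q)) \<le> (INF q\<in>A. G q)"
  proof (intro INF_greatest)
    fix q assume "q \<in> A"
    then have "\<psi> (INF q\<in>A. \<phi> (G q)) \<le> \<psi> (\<phi> (G q))" by (intro monoD[OF m2] INF_lower)
    then show "\<psi> (INF q\<in>A. \<phi> (G q)) \<le> G q" by (simp add: inv)
  qed
  then have "\<phi> (\<psi> (INF q\<in>A. \<phi> (G q))) \<le> \<phi> (INF q\<in>A. G q)" by (rule monoD[OF m1])
  then show "(INF q\<in>A. \<phi> (G q)) \<le> \<phi> (INF q\<in>A. G q)" by (simp add: inv)
qed

lemma affine_ereal_INF:
  assumes c: "0 < c"
  shows "(INF q\<in>A. ereal a + ereal c * G q) = ereal a + ereal c * (INF q\<in>A. G q)"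
proof (rule mono_bij_INF[of "\<lambda>x. ereal a + ereal c * x" "\<lambda>x. ereal (1/c) * (x - ereal a)"])
  show "mono (\<lambda>x. ereal a + ereal c * x)"
    using c by (intro monoI add_left_mono ereal_mult_left_mono) auto
  show "mono (\<lambda>x. ereal (1 / c) * (x - ereal a))"
    using c by (intro monoI ereal_mult_left_mono ereal_minus_mono) auto
  fix x :: ereal
  show "ereal (1 / c) * (ereal a + ereal c * x - ereal a) = x"
    using c by (cases x) auto
  show "ereal a + ereal c * (ereal (1 / c) * (x - ereal a)) = x"
    using c by (cases x) auto
qed

context nmc begin

definition "Gq bb q = ereal (s\<^sup>2 / 2 * ln (2 * pi * s\<^sup>2))
      + ereal (1/2) * enn2ereal (\<integral>\<^sup>+ x. ennreal ((fst x - bb)\<^sup>2) \<partial>q)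
      + ereal (s\<^sup>2) * KL q P"

lemma rho_Gq: "rho_NM K p u s bb = (INF q\<in>dists_with_mean K bb. Gq bb q)"
  by (simp add: rho_NM_def Gq_def)

lemma ln_g: "ln (normal_density b s y) = - (ln (2 * pi * s\<^sup>2) / 2) - (y - b)\<^sup>2 / (2 * s\<^sup>2)"
  using s by (simp add: normal_density_def ln_mult ln_div ln_sqrt power2_commute)

lemma EL_eq:
  assumes q: "prob_space q" and sq[measurable_cong]: "sets q = sets latent_space"
  shows "ereal_expect q (\<lambda>x. ln (normal_density (fst x) s y))
    = ereal (- (ln (2 * pi * s\<^sup>2) / 2)) - ereal (1 / (2 * s\<^sup>2)) * enn2ereal (\<integral>\<^sup>+x. ennreal ((y - fst x)\<^sup>2) \<partial>q)"
proof -
  have "ereal_expect q (\<lambda>x. ln (normal_density (fst x) s y))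
      = ereal_expect q (\<lambda>x. - (ln (2 * pi * s\<^sup>2) / 2) - (y - fst x)\<^sup>2 / (2 * s\<^sup>2))"
    by (simp add: ln_g)
  also have "\<dots> = ereal (- (ln (2 * pi * s\<^sup>2) / 2)) - enn2ereal (\<integral>\<^sup>+x. ennreal ((y - fst x)\<^sup>2 / (2 * s\<^sup>2)) \<partial>q)"
    by (rule ee_const_minus[OF q]) auto
  also have "(\<integral>\<^sup>+x. ennreal ((y - fst x)\<^sup>2 / (2 * s\<^sup>2)) \<partial>q) = ennreal (1 / (2 * s\<^sup>2)) * (\<integral>\<^sup>+x. ennreal ((y - fst x)\<^sup>2) \<partial>q)"
    by (subst nn_integral_cmult[symmetric]) (auto simp: ennreal_mult[symmetric] intro!: nn_integral_cong)
  finally show ?thesis by (simp add: times_ennreal.rep_eq)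
qed

lemma perq:
  assumes q: "q \<in> dists_with_mean K bb"
  shows "- F1_NM K p u s y q = ereal (1 / (2 * s\<^sup>2) * (y - bb)\<^sup>2) + ereal (1 / s\<^sup>2) * Gq bb q"
proof -
  have qp: "prob_space q" and sq[measurable_cong]: "sets q = sets latent_space" and i: "integrable q fst"
    and mean: "(\<integral>x. fst x \<partial>q) = bb"
    using q by (auto simp: dists_with_mean_def latent_dist_def)
  have sP: "sets q = sets P" by (simp add: sq)
  have Kl: "KL q P \<noteq> -\<infinity>" by (rule KL_not_minf[OF prob_P sP])
  have "F1_NM K p u s y q = (ereal (- (ln (2 * pi * s\<^sup>2) / 2)) - ereal (1 / (2 * s\<^sup>2)) *
      (ereal ((y - bb)\<^sup>2) + enn2ereal (\<integral>\<^sup>+x. ennreal ((fst x - bb)\<^sup>2) \<partial>q))) - KL q P"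
    unfolding F1_NM_def EL_eq[OF qp sq] second_moment[OF qp sq i mean]
    by (simp add: plus_ennreal.rep_eq)
  then show ?thesis
    unfolding Gq_def using s
    by (simp only:) (rule ereal_alg[where \<sigma>="s\<^sup>2"], auto simp: Kl)
qed

lemma h1_eq: "h1_NM K p u s y bb = ereal (1 / (2 * s\<^sup>2) * (y - bb)\<^sup>2) + ereal (1 / s\<^sup>2) * rho_NM K p u s bb"
proof -
  have "h1_NM K p u s y bb = (INF q\<in>dists_with_mean K bb. - F1_NM K p u s y q)"
    by (simp add: h1_NM_def ereal_INF_uminus_eq)
  also have "\<dots> = (INF q\<in>dists_with_mean K bb. ereal (1 / (2 * s\<^sup>2) * (y - bb)\<^sup>2) + ereal (1 / s\<^sup>2) * Gq bb q)"
    by (intro INF_cong refl perq)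
  also have "\<dots> = ereal (1 / (2 * s\<^sup>2) * (y - bb)\<^sup>2) + ereal (1 / s\<^sup>2) * rho_NM K p u s bb"
    unfolding rho_Gq using s by (intro affine_ereal_INF) simp
  finally show ?thesis .
qed

end



lemma integrable_pos_neg:
  fixes f :: "'a \<Rightarrow> real"
  assumes [measurable]: "f \<in> borel_measurable M"
    and "(\<integral>\<^sup>+x. ennreal (f x) \<partial>M) < top" "(\<integral>\<^sup>+x. ennreal (- f x) \<partial>M) < top"
  shows "integrable M f"
proof -
  have "(\<integral>\<^sup>+x. ennreal (norm (f x)) \<partial>M) = (\<integral>\<^sup>+x. ennreal (f x) + ennreal (- f x) \<partial>M)"
    apply (intro nn_integral_cong)
    subgoal for x by (cases "0 \<le> f x") (auto simp: ennreal_neg)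
    done
  also have "\<dots> = (\<integral>\<^sup>+x. ennreal (f x) \<partial>M) + (\<integral>\<^sup>+x. ennreal (- f x) \<partial>M)"
    by (intro nn_integral_add) auto
  also have "\<dots> < top" using assms by simp
  finally show ?thesis by (simp add: integrable_iff_bounded)
qed

lemma rn_t_bound:
  assumes m: "0 < m" and g: "0 \<le> g"
  shows "(r::ennreal) * ennreal (g / (enn2real r * m)) \<le> ennreal (g / m)"
proof (cases r rule: ennreal_cases)
  case (real a)
  show ?thesis
  proof (cases "a = 0")
    case False
    then have "ennreal a * ennreal (g / (a * m)) = ennreal (a * (g / (a * m)))"
      using real m g by (subst ennreal_mult) auto
    also have "\<dots> = ennreal (g / m)" using False by simp
    finally show ?thesis using real by simp
  qed (use real in simp)
qed simp

context nmc begin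

lemma gibbs:
  assumes qd: "latent_dist K q"
  shows "F1_NM K p u s y q \<le> ereal (ln (mm y))"
proof -
  have qp: "prob_space q" and sq[measurable_cong]: "sets q = sets latent_space"
    using qd by (auto simp: latent_dist_def)
  interpret Q: prob_space q by fact
  interpret PP: prob_space P by (rule prob_P)
  have sP: "sets q = sets P" by (simp add: sq)
  have Kl: "KL q P \<noteq> -\<infinity>" by (rule KL_not_minf[OF prob_P sP])
  define W where "W = (\<integral>\<^sup>+x. ennreal ((y - fst x)\<^sup>2) \<partial>q)"
  define c0 where "c0 = - (ln (2 * pi * s\<^sup>2) / 2)"
  have EL: "ereal_expect q (\<lambda>x. ln (normal_density (fst x) s y)) = ereal c0 - ereal (1 / (2 * s\<^sup>2)) * enn2ereal W"
    unfolding W_def c0_def by (rule EL_eq[OF qp sq])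
  have ELninf: "ereal c0 - ereal (1 / (2 * s\<^sup>2)) * enn2ereal W \<noteq> \<infinity>"
    using s by (cases "enn2ereal W") auto
  show ?thesis
  proof (cases "W = top")
    case True
    then have "ereal_expect q (\<lambda>x. ln (normal_density (fst x) s y)) = -\<infinity>"
      unfolding EL using s by simp
    then show ?thesis using Kl by (cases "KL q P") (auto simp: F1_NM_def)
  next
    case Wfin: False
    show ?thesis
    proof (cases "absolutely_continuous P q")
      case False
      then show ?thesis using ELninf
        by (cases "ereal c0 - ereal (1 / (2 * s\<^sup>2)) * enn2ereal W") (auto simp: F1_NM_def KL_def EL)
    next
      case ac: True
      define r where "r x = enn2real (RN_deriv P q x)" for x :: "real \<times> nat"
      have rm[measurable]: "r \<in> borel_measurable q"
        unfolding r_def by (simp add: measurable_cong_sets[OF sP refl])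
      have negfin: "(\<integral>\<^sup>+x. ennreal (- ln (r x)) \<partial>q) < top"
        using KL_neg_part[OF prob_P sP ac] unfolding r_def by (simp add: le_less_trans)
      have KLe: "KL q P = ereal_expect q (\<lambda>x. ln (r x))"
        using ac by (simp add: KL_def r_def)
      show ?thesis
      proof (cases "(\<integral>\<^sup>+x. ennreal (ln (r x)) \<partial>q) = top")
        case True
        then have "KL q P = \<infinity>" unfolding KLe ereal_expect_def using negfin by (simp add: enn2ereal_fin)
        then show ?thesis using ELninf
          by (cases "ereal c0 - ereal (1 / (2 * s\<^sup>2)) * enn2ereal W") (auto simp: F1_NM_def EL)
      next
        case False
        have ilr: "integrable q (\<lambda>x. ln (r x))"
          using False negfin by (intro integrable_pos_neg) (auto simp: top.not_eq_extremum)
        define g where "g x = normal_density (fst x) s y" for x :: "real \<times> nat"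
        have gm[measurable]: "g \<in> borel_measurable q"
          unfolding g_def by (simp add: measurable_cong_sets[OF sq refl])
        have gpos: "0 < g x" for x using s by (simp add: g_def normal_density_pos)
        have lng: "ln (g x) = c0 - (y - fst x)\<^sup>2 / (2 * s\<^sup>2)" for x
          by (simp add: g_def ln_g c0_def)
        have iw: "integrable q (\<lambda>x. (y - fst x)\<^sup>2)"
          using Wfin by (intro integrableI_nonneg) (auto simp: W_def top.not_eq_extremum)
        have ilg: "integrable q (\<lambda>x. ln (g x))"
          unfolding lng using iw by auto
        have F1: "F1_NM K p u s y q = ereal (\<integral>x. ln (g x) \<partial>q) - ereal (\<integral>x. ln (r x) \<partial>q)"
          unfolding F1_NM_def KLe using ee_integrable[OF ilg] ee_integrable[OF ilr]
          by (simp add: g_def)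
        define m where "m = mm y"
        have m: "0 < m" by (simp add: m_def mm_pos)
        define t where "t x = g x / (r x * m)" for x :: "real \<times> nat"
        have tm[measurable]: "t \<in> borel_measurable q" unfolding t_def by measurable
        have tnn: "0 \<le> t x" for x using gpos[of x] m by (simp add: t_def r_def less_imp_le)
        have dens: "density P (RN_deriv P q) = q"
          by (rule PP.density_RN_deriv[OF ac sP])
        have rpos: "AE x in q. 0 < r x"
        proof -
          have "AE x in P. RN_deriv P q x \<noteq> \<infinity>"
            by (rule PP.RN_deriv_finite[OF _ ac sP]) (rule Q.sigma_finite_measure)
          then have a1: "AE x in q. RN_deriv P q x \<noteq> \<infinity>"
            by (rule absolutely_continuous_AE[OF sP ac])
          have "AE x in density P (RN_deriv P q). 0 < RN_deriv P q x"
            by (subst AE_density) auto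
          then have a2: "AE x in q. 0 < RN_deriv P q x" by (metis dens)
          show ?thesis using a1 a2
            by eventually_elim (auto simp: r_def enn2real_positive_iff top.not_eq_extremum)
        qed
        have tint: "(\<integral>\<^sup>+x. ennreal (t x) \<partial>q) \<le> 1"
        proof -
          have "(\<integral>\<^sup>+x. ennreal (t x) \<partial>q) = (\<integral>\<^sup>+x. RN_deriv P q x * ennreal (t x) \<partial>P)"
            by (rule PP.RN_deriv_nn_integral[OF ac sP]) (simp add: measurable_cong_sets[OF sP[symmetric] refl])
          also have "\<dots> \<le> (\<integral>\<^sup>+x. ennreal (g x / m) \<partial>P)"
            unfolding t_def r_def by (intro nn_integral_mono rn_t_bound m less_imp_le gpos)
          also have "\<dots> = ennreal (\<integral>x. g x / m \<partial>P)"
            using int_g[of y] gpos m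
            by (intro nn_integral_eq_integral) (auto simp: g_def less_imp_le)
          also have "(\<integral>x. g x / m \<partial>P) = 1"
            using m by (simp add: g_def marg_eq[symmetric] marg_NM_def m_def)
          finally show ?thesis by simp
        qed
        have it: "integrable q t"
          using tint tnn by (intro integrableI_nonneg) (auto simp: le_less_trans)
        have intt: "(\<integral>x. t x \<partial>q) \<le> 1"
          using tint tnn by (subst integral_eq_nn_integral) (auto simp: enn2real_leI)
        have pt: "AE x in q. ln (g x) - ln (r x) - ln m \<le> t x - 1"
          using rpos
        proof eventually_elim
          case (elim x)
          have "ln (g x) - ln (r x) - ln m = ln (t x)"
            using elim gpos[of x] m by (simp add: t_def ln_div ln_mult)
          also have "\<dots> \<le> t x - 1"
            using elim gpos[of x] m by (intro ln_le_minus_one) (simp add: t_def)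
          finally show ?case .
        qed
        have "(\<integral>x. ln (g x) - ln (r x) - ln m \<partial>q) \<le> (\<integral>x. t x - 1 \<partial>q)"
          using ilg ilr it pt by (intro integral_mono_AE) auto
        then have "(\<integral>x. ln (g x) \<partial>q) - (\<integral>x. ln (r x) \<partial>q) - ln m \<le> (\<integral>x. t x \<partial>q) - 1"
          using ilg ilr it by (simp add: Q.prob_space)
        then have "(\<integral>x. ln (g x) \<partial>q) - (\<integral>x. ln (r x) \<partial>q) \<le> ln m" using intt by linarith
        then show ?thesis unfolding F1 m_def by simp
      qed
    qed
  qed
qed

end



context nmc begin

definition "Qy y = density P (\<lambda>x. ennreal (normal_density (fst x) s y / mm y))"

lemma sets_Qy[simp, measurable_cong]: "sets (Qy y) = sets latent_space"
  by (simp add: Qy_def)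

lemma nn_gm: "(\<integral>\<^sup>+x. ennreal (normal_density (fst x) s y / mm y) \<partial>P) = 1"
proof -
  have "(\<integral>\<^sup>+x. ennreal (normal_density (fst x) s y / mm y) \<partial>P) = ennreal (\<integral>x. normal_density (fst x) s y / mm y \<partial>P)"
    using int_g[of y] mm_pos[of y] by (intro nn_integral_eq_integral) auto
  also have "(\<integral>x. normal_density (fst x) s y / mm y \<partial>P) = 1"
    using mm_pos[of y] by (simp add: marg_eq[symmetric] marg_NM_def)
  finally show ?thesis by simp
qed

lemma Qy_prob: "prob_space (Qy y)"
proof (rule prob_spaceI)
  have "UNIV \<in> sets P" using sets.top[of P] by simp
  then show "emeasure (Qy y) (space (Qy y)) = 1"
    by (simp add: Qy_def emeasure_density nn_gm)
qed

lemma Qy_dist: "Qy y \<in> dists_with_mean K (SS y)"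
proof -
  have m: "0 < mm y" by (rule mm_pos)
  have one: "emeasure (Qy y) (UNIV \<times> {1..K}) = 1"
  proof -
    have "emeasure (Qy y) (UNIV \<times> {1..K}) = (\<integral>\<^sup>+x. ennreal (normal_density (fst x) s y / mm y) * indicator (UNIV \<times> {1..K}) x \<partial>P)"
      unfolding Qy_def by (subst emeasure_density) auto
    also have "\<dots> = (\<integral>\<^sup>+x. ennreal (normal_density (fst x) s y / mm y) \<partial>P)"
      by (subst (1 2) nn_prior) (auto intro!: sum.cong arg_cong2[where f="(*)"] nn_integral_cong simp: indicator_def)
    finally show ?thesis by (simp add: nn_gm)
  qed
  have ld: "latent_dist K (Qy y)" using Qy_prob one by (simp add: latent_dist_def)
  have eqf: "(\<lambda>x. (normal_density (fst x) s y / mm y) *\<^sub>R fst x) = (\<lambda>x. (1 / mm y) * (fst x * normal_density (fst x) s y))"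
    by (simp add: fun_eq_iff)
  have iP: "integrable P (\<lambda>x. (normal_density (fst x) s y / mm y) *\<^sub>R fst x)"
    unfolding eqf by (intro integrable_mult_right int_bg)
  have i: "integrable (Qy y) fst"
    unfolding Qy_def using m iP by (subst integrable_density) (auto simp: less_imp_le)
  have ne: "(\<integral>x. normal_density (fst x) s y * fst x \<partial>P) = nn y"
    using num_eq[of y] by (simp add: mult.commute)
  have "(\<integral>x. fst x \<partial>Qy y) = SS y"
    unfolding Qy_def using m by (subst integral_density) (auto simp: ne SS_def less_imp_le)
  then show ?thesis using ld i by (simp add: dists_with_mean_def)
qed

lemma gm_bound: "\<bar>normal_density b s y / m * ln (normal_density b s y)\<bar> \<le> (\<bar>ln (1 / sqrt (2 * pi * s\<^sup>2))\<bar> + 1) / sqrt (2 * pi * s\<^sup>2) / m"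
  if m: "0 < m" for b m
proof -
  define C where "C = 1 / sqrt (2 * pi * s\<^sup>2)"
  define w where "w = (y - b)\<^sup>2 / (2 * s\<^sup>2)"
  have C: "0 < C" using s by (simp add: C_def)
  have w: "0 \<le> w" by (simp add: w_def)
  have nd: "normal_density b s y = C * exp (- w)"
    by (simp add: normal_density_def C_def w_def power2_commute)
  have lnf: "ln (normal_density b s y) = ln C - w"
    using C by (simp add: nd ln_mult)
  have we: "w * exp (- w) \<le> 1"
  proof -
    have "w \<le> exp w" using exp_ge_add_one_self[of w] by linarith
    then show ?thesis by (simp add: exp_minus field_simps)
  qed
  have e: "0 < exp (- w)" by simp
  have e1: "exp (- w) \<le> 1" using w by simp
  have t: "\<bar>ln C - w\<bar> \<le> \<bar>ln C\<bar> + w" using w abs_triangle_ineq4[of "ln C" w] by simp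
  have "\<bar>C * exp (- w) * (ln C - w)\<bar> = C * exp (- w) * \<bar>ln C - w\<bar>"
    using C e by (simp add: abs_mult)
  also have "\<dots> \<le> C * exp (- w) * (\<bar>ln C\<bar> + w)"
    using C e t by (intro mult_left_mono) auto
  also have "\<dots> = C * (exp (- w) * \<bar>ln C\<bar>) + C * (w * exp (- w))"
    by (simp add: algebra_simps)
  also have "\<dots> \<le> C * (1 * \<bar>ln C\<bar>) + C * 1"
    using C w we e1 by (intro add_mono mult_left_mono mult_right_mono) auto
  finally have B: "\<bar>C * exp (- w) * (ln C - w)\<bar> \<le> (\<bar>ln C\<bar> + 1) * C" by (simp add: algebra_simps)
  have "\<bar>normal_density b s y / m * ln (normal_density b s y)\<bar> = \<bar>C * exp (- w) * (ln C - w)\<bar> / m"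
    using m unfolding lnf by (simp add: nd abs_divide abs_mult)
  also have "\<dots> \<le> (\<bar>ln C\<bar> + 1) * C / m"
    using B m by (intro divide_right_mono) auto
  finally show ?thesis by (simp add: C_def)
qed

lemma F1_Qy: "F1_NM K p u s y (Qy y) = ereal (ln (mm y))"
proof -
  define m where "m = mm y"
  have m: "0 < m" by (simp add: m_def mm_pos)
  interpret PP: prob_space P by (rule prob_P)
  interpret QQ: prob_space "Qy y" by (rule Qy_prob)
  define f where "f x = ennreal (normal_density (fst x) s y / m)" for x :: "real \<times> nat"
  have fm[measurable]: "f \<in> borel_measurable P" unfolding f_def by measurable
  have Qd: "Qy y = density P f" by (simp add: Qy_def f_def[abs_def] m_def)
  have ac: "absolutely_continuous P (Qy y)" unfolding Qd by (rule absolutely_continuousI_density) simp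
  have aeP: "AE x in P. f x = RN_deriv P (Qy y) x"
    by (rule PP.RN_deriv_unique[OF fm Qd[symmetric]])
  have sQ: "sets (Qy y) = sets P" by simp
  have "AE x in Qy y. f x = RN_deriv P (Qy y) x"
    by (rule absolutely_continuous_AE[OF sQ ac aeP])
  then have ae: "AE x in Qy y. ln (enn2real (RN_deriv P (Qy y) x)) = ln (normal_density (fst x) s y) - ln m"
  proof eventually_elim
    case (elim x)
    have "enn2real (RN_deriv P (Qy y) x) = normal_density (fst x) s y / m"
      using elim[symmetric] m by (simp add: f_def)
    then show ?case using m s normal_density_pos[OF s, of "fst x" y] by (simp add: ln_div)
  qed
  have il: "integrable (Qy y) (\<lambda>x. ln (normal_density (fst x) s y))"
    unfolding Qy_def
  proof (subst integrable_density)
    show "integrable P (\<lambda>x. (normal_density (fst x) s y / mm y) *\<^sub>R ln (normal_density (fst x) s y))"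
      using gm_bound[OF mm_pos[of y]] by (intro PP.integrable_const_bound) (auto simp: normal_density_def)
  qed (use mm_pos[of y] in \<open>auto simp: less_imp_le\<close>)
  have KLe: "KL (Qy y) P = ereal ((\<integral>x. ln (normal_density (fst x) s y) \<partial>Qy y) - ln m)"
  proof -
    have "KL (Qy y) P = ereal_expect (Qy y) (\<lambda>x. ln (enn2real (RN_deriv P (Qy y) x)))"
      using ac by (simp add: KL_def)
    also have "\<dots> = ereal_expect (Qy y) (\<lambda>x. ln (normal_density (fst x) s y) - ln m)"
      by (rule ee_cong_AE[OF ae])
    also have "\<dots> = ereal (\<integral>x. ln (normal_density (fst x) s y) - ln m \<partial>Qy y)"
      using il by (intro ee_integrable) auto
    finally show ?thesis using il by (simp add: QQ.prob_space)
  qed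
  show ?thesis
    unfolding F1_NM_def KLe ee_integrable[OF il] by (simp add: m_def)
qed

lemma rho_lower: "rho_NM K p u s bb \<ge> ereal (- s\<^sup>2 * ln (mm y) - 1/2 * (y - bb)\<^sup>2)"
  unfolding rho_Gq
proof (intro INF_greatest)
  fix q assume q: "q \<in> dists_with_mean K bb"
  have "F1_NM K p u s y q \<le> ereal (ln (mm y))"
    using q by (intro gibbs) (simp add: dists_with_mean_def)
  then have "- ereal (ln (mm y)) \<le> - F1_NM K p u s y q" by (simp only: ereal_minus_le_minus)
  then have "ereal (- ln (mm y)) \<le> - F1_NM K p u s y q" by (metis uminus_ereal.simps(1))
  also have "\<dots> = ereal (1 / (2 * s\<^sup>2) * (y - bb)\<^sup>2) + ereal (1 / s\<^sup>2) * Gq bb q" by (rule perq[OF q])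
  finally have *: "ereal (- ln (mm y)) \<le> ereal (1 / (2 * s\<^sup>2) * (y - bb)\<^sup>2) + ereal (1 / s\<^sup>2) * Gq bb q" .
  show "ereal (- s\<^sup>2 * ln (mm y) - 1/2 * (y - bb)\<^sup>2) \<le> Gq bb q"
  proof (cases "Gq bb q")
    case (real r)
    then have "- ln (mm y) \<le> 1 / (2 * s\<^sup>2) * (y - bb)\<^sup>2 + 1 / s\<^sup>2 * r" using * by simp
    then have "- ln (mm y) - 1 / (2 * s\<^sup>2) * (y - bb)\<^sup>2 \<le> 1 / s\<^sup>2 * r" by linarith
    then have "s\<^sup>2 * (- ln (mm y) - 1 / (2 * s\<^sup>2) * (y - bb)\<^sup>2) \<le> s\<^sup>2 * (1 / s\<^sup>2 * r)"
      using s by (intro mult_left_mono) auto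
    then have "- s\<^sup>2 * ln (mm y) - 1/2 * (y - bb)\<^sup>2 \<le> r" using s by (simp add: right_diff_distrib)
    then show ?thesis using real by simp
  next
    case MInf then show ?thesis using * s by simp
  qed simp
qed

lemma rho_at: "rho_NM K p u s (SS y) = ereal (- s\<^sup>2 * ln (mm y) - 1/2 * (y - SS y)\<^sup>2)"
proof (rule antisym[OF _ rho_lower])
  have "ereal (- ln (mm y)) = - F1_NM K p u s y (Qy y)" by (simp add: F1_Qy)
  also have "\<dots> = ereal (1 / (2 * s\<^sup>2) * (y - SS y)\<^sup>2) + ereal (1 / s\<^sup>2) * Gq (SS y) (Qy y)"
    by (rule perq[OF Qy_dist])
  finally have *: "ereal (- ln (mm y)) = ereal (1 / (2 * s\<^sup>2) * (y - SS y)\<^sup>2) + ereal (1 / s\<^sup>2) * Gq (SS y) (Qy y)" .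
  have "Gq (SS y) (Qy y) = ereal (- s\<^sup>2 * ln (mm y) - 1/2 * (y - SS y)\<^sup>2)"
  proof (cases "Gq (SS y) (Qy y)")
    case (real r)
    then have "- ln (mm y) = 1 / (2 * s\<^sup>2) * (y - SS y)\<^sup>2 + 1 / s\<^sup>2 * r" using * by simp
    then have "1 / s\<^sup>2 * r = - ln (mm y) - 1 / (2 * s\<^sup>2) * (y - SS y)\<^sup>2" by linarith
    then have "s\<^sup>2 * (1 / s\<^sup>2 * r) = s\<^sup>2 * (- ln (mm y) - 1 / (2 * s\<^sup>2) * (y - SS y)\<^sup>2)" by simp
    then have "r = - s\<^sup>2 * ln (mm y) - 1/2 * (y - SS y)\<^sup>2" using s by (simp add: right_diff_distrib)
    then show ?thesis using real by simp
  qed (use * s in auto)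
  then show "rho_NM K p u s (SS y) \<le> ereal (- s\<^sup>2 * ln (mm y) - 1/2 * (y - SS y)\<^sup>2)"
    unfolding rho_Gq by (metis INF_lower Qy_dist)
qed

end



context nmc begin

lemma loglik_deriv: "((\<lambda>y. ln (mm y)) has_real_derivative (- (z - SS z) / s\<^sup>2)) (at z)"
proof -
  define D where "D = (\<Sum>k\<in>{1..K}. p k * (- z / vv k * nd s (u k) z))"
  have d: "(mm has_real_derivative D) (at z)" unfolding D_def by (rule mm_deriv)
  have m: "0 < mm z" by (rule mm_pos)
  have "((\<lambda>y. ln (mm y)) has_real_derivative inverse (mm z) * D) (at z)"
    by (rule DERIV_chain2[OF DERIV_ln[OF m] d])
  moreover have "s\<^sup>2 * D = nn z - z * mm z"
  proof -
    have t: "s\<^sup>2 * (p k * (- z / vv k * nd s (u k) z)) = p k * ((u k)\<^sup>2 / vv k) * z * nd s (u k) z - z * (p k * nd s (u k) z)" for k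
    proof -
      have w1: "(u k)\<^sup>2 / vv k = 1 - s\<^sup>2 / vv k"
      proof -
        have "(u k)\<^sup>2 = vv k - s\<^sup>2" by (simp add: vv_def)
        then show ?thesis using vv_pos[of k] by (simp add: diff_divide_distrib)
      qed
      show ?thesis unfolding w1 using vv_pos[of k] by (simp add: field_simps)
    qed
    show ?thesis unfolding D_def nn_def mm_def sum_distrib_left t
      by (simp add: sum_subtractf)
  qed
  then have "inverse (mm z) * D = - (z - SS z) / s\<^sup>2"
    using m s by (simp add: SS_def field_simps)
  ultimately show ?thesis by simp
qed

end

theorem mainTheorem7:
  fixes K :: nat and p u :: "nat \<Rightarrow> real" and s y :: real
  assumes K: "K \<ge> 1"
    and p_nonneg: "\<forall>k\<in>{1..K}. p k \<ge> 0"
    and p_sum: "(\<Sum>k\<in>{1..K}. p k) = 1"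
    and u_nonneg: "\<forall>k\<in>{1..K}. u k \<ge> 0"
    and nondeg: "\<exists>k\<in>{1..K}. p k > 0 \<and> u k > 0"
    and s: "s > 0"
  shows "(\<forall>bbar. h1_NM K p u s y bbar
            = ereal (1 / (2 * s\<^sup>2) * (y - bbar)\<^sup>2) + ereal (1 / s\<^sup>2) * rho_NM K p u s bbar)
       \<and> (\<forall>z. rho_NM K p u s (postmean_NM K p u s z)
               = ereal (- s\<^sup>2 * loglik_NM K p u s z - 1/2 * (z - postmean_NM K p u s z)\<^sup>2)
            \<and> ((\<lambda>b. real_of_ereal (rho_NM K p u s b)) has_real_derivative (z - postmean_NM K p u s z))
                 (at (postmean_NM K p u s z))
            \<and> (loglik_NM K p u s has_real_derivative (- (z - postmean_NM K p u s z) / s\<^sup>2)) (at z))"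
proof -
  interpret nmc K p u s using assms by unfold_locales
  have part1: "\<forall>bbar. h1_NM K p u s y bbar
            = ereal (1 / (2 * s\<^sup>2) * (y - bbar)\<^sup>2) + ereal (1 / s\<^sup>2) * rho_NM K p u s bbar"
    using h1_eq by blast
  have deriv: "((\<lambda>b. real_of_ereal (rho_NM K p u s b)) has_real_derivative (z - SS z)) (at (SS z))" for z
  proof (rule envelope_deriv[where L="\<lambda>y. - s\<^sup>2 * ln (mm y)"])
    show "\<And>x y. x < y \<Longrightarrow> SS x < SS y" by (rule SS_strict_mono)
    show "\<And>y. isCont SS y" by (rule SS_cont)
    show "\<And>y. real_of_ereal (rho_NM K p u s (SS y)) = - s\<^sup>2 * ln (mm y) - 1 / 2 * (y - SS y)\<^sup>2"
      by (simp add: rho_at)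
    fix y y'
    have "ereal (- s\<^sup>2 * ln (mm y) - 1/2 * (y - SS y')\<^sup>2) \<le> rho_NM K p u s (SS y')"
      by (rule rho_lower)
    then show "- s\<^sup>2 * ln (mm y) - 1 / 2 * (y - SS y')\<^sup>2 \<le> real_of_ereal (rho_NM K p u s (SS y'))"
      by (simp add: rho_at)
  qed
  show ?thesis
    using part1 deriv loglik_deriv rho_at
    by (simp add: postmean_eq loglik_eq)
qed


end
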